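(* Let $f:\mathbb{R}^p\to\mathbb{R}$ be twice differentiable, let $k^*$ be a positive integer and $\vec w^*=\arg\min_{\vec w:\ \|\vec w\|_0^{\mathcal{G}}\le k^*}f(\vec w)$. Let $k'=2k+k^*$, where $k=O\!\left(\left(\frac{L_{k'}}{\alpha_{k'}}\right)^2k^*\right)$, and suppose $f$ satisfies RSC/RSS of order $k'$ with constants $\alpha_{k'},L_{k'}$. Run the IHT algorithm with step size $\eta=1/L_{k'}$ and with the exact projection $P_k^{\mathcal{G}}$. Then for $\epsilon>0$, the iterate $\vec w_T$ with $T=O\!\left(\frac{L_{k'}}{\alpha_{k'}}\cdot\frac{\|\vec w^*\|_2}{\epsilon}\right)$ satisfies \[ \|\vec w_T-\vec w^*\|_2\le\epsilon+\frac{10L_{k'}}{\alpha_{k'}}\gamma,\qquad \gamma=\frac{2}{L_{k'}}\max_{S:\ |\operatorname{G-supp}(S)|\le k}\|(\nabla f(\vec w^* ))_S\|_2. \]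
   Context: Groups $\mathcal{G}=\{G_1,\dots,G_M\}$, $G_i\subseteq[p]$, $\bigcup_iG_i=[p]$. For $S\subseteq[p]$, $\vec v_S$ agrees with $\vec v$ on $S$ and is $0$ elsewhere. $\|\vec w\|_0^{\mathcal{G}}$ is the minimum number of nonzero terms in a decomposition $\vec w=\sum_i\vec a_{G_i}$ with $\operatorname{supp}(\vec a_{G_i})\subseteq G_i$ (the minimum number of groups covering $\operatorname{supp}(\vec w)$); $|\operatorname{G-supp}(S)|$ is the minimum number of groups whose union covers $S$. RSC/RSS of order $k$ with constants $\alpha_k,L_k$: $\alpha_kI\preceq\nabla^2f(\vec w)\preceq L_kI$ for all $\vec w$ with $\|\vec w\|_0^{\mathcal{G}}\le k$. Exact projection: $P_k^{\mathcal{G}}(\vec g)=\arg\min_{\vec w}\|\vec w-\vec g\|_2^2$ subject to $\|\vec w\|_0^{\mathcal{G}}\le k$. IHT algorithm: start from a $k$-group sparse $\vec w_0$ and iterate $\vec w_{t+1}=P_k^{\mathcal{G}}(\vec w_t-\eta\nabla f(\vec w_t))$. *)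

theory Defs
  imports "HOL-Analysis.Analysis"
begin

text \<open>Vectors of R^p are modelled as functions nat => real vanishing outside {..<p}
  (so that the dimension p is an ordinary variable and the hidden O-constants can be
  quantified independently of p). Topology on nat => real is the product topology
  (HOL-Analysis Function_Topology), which on R^p is the Euclidean topology.\<close>

definition Rp :: "nat \<Rightarrow> (nat \<Rightarrow> real) set" where
  "Rp p = {v. \<forall>i. p \<le> i \<longrightarrow> v i = 0}"

definition l2 :: "nat \<Rightarrow> (nat \<Rightarrow> real) \<Rightarrow> real" where
  "l2 p v = sqrt (\<Sum>i<p. (v i)\<^sup>2)"

definition restr :: "nat set \<Rightarrow> (nat \<Rightarrow> real) \<Rightarrow> (nat \<Rightarrow> real)" where
  "restr S v = (\<lambda>i. if i \<in> S then v i else 0)"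

definition gsupp_card :: "(nat \<Rightarrow> nat set) \<Rightarrow> nat \<Rightarrow> nat set \<Rightarrow> nat" where
  "gsupp_card G M S = (LEAST m. \<exists>I. I \<subseteq> {..<M} \<and> card I = m \<and> S \<subseteq> (\<Union>i\<in>I. G i))"

definition gnorm0 :: "(nat \<Rightarrow> nat set) \<Rightarrow> nat \<Rightarrow> (nat \<Rightarrow> real) \<Rightarrow> nat" where
  "gnorm0 G M w = gsupp_card G M {i. w i \<noteq> 0}"

definition twice_diff_grad_hess ::
  "nat \<Rightarrow> ((nat \<Rightarrow> real) \<Rightarrow> real) \<Rightarrow> ((nat \<Rightarrow> real) \<Rightarrow> (nat \<Rightarrow> real))
     \<Rightarrow> ((nat \<Rightarrow> real) \<Rightarrow> nat \<Rightarrow> nat \<Rightarrow> real) \<Rightarrow> bool" where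
  "twice_diff_grad_hess p f g H \<longleftrightarrow>
     (\<forall>w\<in>Rp p. g w \<in> Rp p \<and>
        ((\<lambda>h. (f (\<lambda>i. w i + h i) - f w - (\<Sum>i<p. g w i * h i)) / l2 p h) \<longlongrightarrow> 0)
           (at (\<lambda>_. 0) within Rp p) \<and>
        (\<forall>i<p. ((\<lambda>h. (g (\<lambda>j. w j + h j) i - g w i - (\<Sum>j<p. H w i j * h j)) / l2 p h)
                   \<longlongrightarrow> 0) (at (\<lambda>_. 0) within Rp p)))"

definition rsc_rss ::
  "nat \<Rightarrow> (nat \<Rightarrow> nat set) \<Rightarrow> nat \<Rightarrow> ((nat \<Rightarrow> real) \<Rightarrow> nat \<Rightarrow> nat \<Rightarrow> real)
     \<Rightarrow> nat \<Rightarrow> real \<Rightarrow> real \<Rightarrow> bool" where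
  "rsc_rss p G M H k \<alpha> L \<longleftrightarrow>
     (\<forall>w\<in>Rp p. gnorm0 G M w \<le> k \<longrightarrow>
        (\<forall>v\<in>Rp p. \<alpha> * (l2 p v)\<^sup>2 \<le> (\<Sum>i<p. \<Sum>j<p. v i * H w i j * v j) \<and>
                   (\<Sum>i<p. \<Sum>j<p. v i * H w i j * v j) \<le> L * (l2 p v)\<^sup>2))"

text \<open>Exact projection P_k^G(g): the set of all minimizers (any of them may be chosen).\<close>
definition proj_set ::
  "nat \<Rightarrow> (nat \<Rightarrow> nat set) \<Rightarrow> nat \<Rightarrow> nat \<Rightarrow> (nat \<Rightarrow> real) \<Rightarrow> (nat \<Rightarrow> real) set" where
  "proj_set p G M k v = {w \<in> Rp p. gnorm0 G M w \<le> k \<and>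
      (\<forall>u\<in>Rp p. gnorm0 G M u \<le> k \<longrightarrow>
          (l2 p (\<lambda>i. w i - v i))\<^sup>2 \<le> (l2 p (\<lambda>i. u i - v i))\<^sup>2)}"

end

theory Submission
  imports Defs
begin

lemma l2_scale: "l2 p (\<lambda>i. s * h i) = \<bar>s\<bar> * l2 p h"
proof -
  have "(\<Sum>i<p. (s * h i)\<^sup>2) = s\<^sup>2 * (\<Sum>i<p. (h i)\<^sup>2)"
    by (simp add: sum_distrib_left power_mult_distrib)
  then show ?thesis unfolding l2_def by (simp add: real_sqrt_mult)
qed

lemma l2_nz_ex: assumes "l2 p h \<noteq> 0" shows "\<exists>i. h i \<noteq> 0"
proof (rule ccontr)
  assume "\<not> ?thesis" then have "\<forall>i. h i = 0" by auto
  then show False using assms unfolding l2_def by simp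
qed

lemma dir_deriv0:
  fixes F :: "(nat \<Rightarrow> real) \<Rightarrow> real"
  assumes lim: "((\<lambda>k. (F (\<lambda>i. w i + k i) - F w - (\<Sum>i<p. a i * k i)) / l2 p k) \<longlongrightarrow> 0) (at (\<lambda>_. 0) within Rp p)"
  and h: "h \<in> Rp p" "l2 p h \<noteq> 0"
  shows "((\<lambda>s. F (\<lambda>i. w i + s * h i)) has_field_derivative (\<Sum>i<p. a i * h i)) (at 0)"
proof -
  define k where "k = (\<lambda>s::real. \<lambda>i. s * h i)"
  have cont: "continuous_on UNIV k" unfolding k_def
    by (intro continuous_on_coordinatewise_then_product continuous_intros)
  have tk: "(k \<longlongrightarrow> (\<lambda>_. 0)) (at 0)"
  proof -
    have "(k \<longlongrightarrow> k 0) (at 0)" using cont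
      by (metis UNIV_I continuous_on_def open_UNIV at_within_open)
    moreover have "k 0 = (\<lambda>_. 0)" unfolding k_def by auto
    ultimately show ?thesis by simp
  qed
  obtain j where j: "h j \<noteq> 0" using l2_nz_ex[OF h(2)] by auto
  have ev0: "k s \<in> Rp p \<and> k s \<noteq> (\<lambda>_. 0)" if s: "s \<noteq> 0" for s
  proof
    show "k s \<in> Rp p" using h(1) unfolding k_def Rp_def by auto
    show "k s \<noteq> (\<lambda>_. 0)" proof
      assume "k s = (\<lambda>_. 0)" then have "k s j = 0" by simp
      then show False using s j unfolding k_def by simp
    qed
  qed
  have ev: "eventually (\<lambda>s. k s \<in> Rp p \<and> k s \<noteq> (\<lambda>_. 0)) (at 0)"
    unfolding eventually_at_filter using ev0 by (intro always_eventually) auto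
  have fl: "filterlim k (at (\<lambda>_. 0) within Rp p) (at 0)"
    unfolding filterlim_at using ev tk by auto
  define c where "c = (\<Sum>i<p. a i * h i)"
  define E where "E = (\<lambda>s. (F (\<lambda>i. w i + k s i) - F w - (\<Sum>i<p. a i * k s i)) / l2 p (k s))"
  have E0: "(E \<longlongrightarrow> 0) (at 0)" unfolding E_def
    using filterlim_compose[OF lim fl] by simp
  have E1: "((\<lambda>s. \<bar>E s\<bar> * l2 p h) \<longlongrightarrow> 0) (at 0)"
    using tendsto_mult[OF tendsto_rabs[OF E0] tendsto_const[of "l2 p h"]] by simp
  have eq: "\<bar>(F (\<lambda>i. w i + s * h i) - F w) / s - c\<bar> = \<bar>E s\<bar> * l2 p h" if s: "s \<noteq> 0" for s
  proof -
    have sk: "(\<Sum>i<p. a i * k s i) = s * c" unfolding k_def c_def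
      by (simp add: sum_distrib_left algebra_simps)
    have lk: "l2 p (k s) = \<bar>s\<bar> * l2 p h" unfolding k_def by (rule l2_scale)
    have "l2 p h \<ge> 0" unfolding l2_def by (simp add: sum_nonneg)
    then have lpos: "l2 p h > 0" using h(2) by linarith
    have "(F (\<lambda>i. w i + s * h i) - F w) / s - c = (F (\<lambda>i. w i + s * h i) - F w - s * c) / s"
      using s by (simp add: field_simps)
    also have "\<dots> = E s * (\<bar>s\<bar> * l2 p h) / s"
      unfolding E_def sk lk using s lpos by (simp add: k_def)
    finally show ?thesis using s lpos by (simp add: abs_mult)
  qed
  have "((\<lambda>s. (F (\<lambda>i. w i + s * h i) - F w) / s - c) \<longlongrightarrow> 0) (at 0)"
  proof (subst tendsto_rabs_zero_iff[symmetric])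
    show "((\<lambda>s. \<bar>(F (\<lambda>i. w i + s * h i) - F w) / s - c\<bar>) \<longlongrightarrow> 0) (at 0)"
      using E1 by (rule Lim_transform_eventually) (auto simp: eventually_at eq intro!: exI[of _ 1])
  qed
  then have "((\<lambda>s. (F (\<lambda>i. w i + s * h i) - F w) / s) \<longlongrightarrow> c) (at 0)"
    using Lim_null by blast
  then show ?thesis unfolding c_def DERIV_def by simp
qed

lemma dir_deriv:
  fixes F :: "(nat \<Rightarrow> real) \<Rightarrow> real"
  assumes lim: "((\<lambda>k. (F (\<lambda>i. (u i + t * h i) + k i) - F (\<lambda>i. u i + t * h i) - (\<Sum>i<p. a i * k i)) / l2 p k) \<longlongrightarrow> 0) (at (\<lambda>_. 0) within Rp p)"
  and h: "h \<in> Rp p" "l2 p h \<noteq> 0"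
  shows "((\<lambda>s. F (\<lambda>i. u i + s * h i)) has_field_derivative (\<Sum>i<p. a i * h i)) (at t)"
proof -
  have d: "((\<lambda>s. F (\<lambda>i. (u i + t * h i) + s * h i)) has_field_derivative (\<Sum>i<p. a i * h i)) (at 0)"
    by (rule dir_deriv0[OF lim h])
  have e: "(\<lambda>s. F (\<lambda>i. (u i + t * h i) + s * h i)) = (\<lambda>s. (\<lambda>s. F (\<lambda>i. u i + s * h i)) (s + t))"
    by (simp add: algebra_simps)
  show ?thesis using d unfolding e using DERIV_shift[of _ _ 0 t] by simp
qed

lemma Rp_comb: "u \<in> Rp p \<Longrightarrow> h \<in> Rp p \<Longrightarrow> (\<lambda>i. u i + t * h i) \<in> Rp p"
  unfolding Rp_def by auto

lemma taylor2:
  assumes td: "twice_diff_grad_hess p f g H"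
  and u: "u \<in> Rp p" and h: "h \<in> Rp p"
  and q: "\<And>t. 0 \<le> t \<Longrightarrow> t \<le> 1 \<Longrightarrow> lo \<le> (\<Sum>i<p. \<Sum>j<p. h i * H (\<lambda>i. u i + t * h i) i j * h j)
             \<and> (\<Sum>i<p. \<Sum>j<p. h i * H (\<lambda>i. u i + t * h i) i j * h j) \<le> hi"
  and nz: "l2 p h \<noteq> 0"
  shows "f (\<lambda>i. u i + h i) \<ge> f u + (\<Sum>i<p. g u i * h i) + lo / 2
       \<and> f (\<lambda>i. u i + h i) \<le> f u + (\<Sum>i<p. g u i * h i) + hi / 2"
proof -
  define w where "w = (\<lambda>t::real. \<lambda>i. u i + t * h i)"
  define \<phi> where "\<phi> = (\<lambda>t. f (w t))"
  define \<psi> where "\<psi> = (\<lambda>t. \<Sum>i<p. g (w t) i * h i)"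
  define q where "q = (\<lambda>t. \<Sum>i<p. \<Sum>j<p. h i * H (w t) i j * h j)"
  have wR: "w t \<in> Rp p" for t unfolding w_def by (rule Rp_comb[OF u h])
  have d1: "(\<phi> has_field_derivative \<psi> t) (at t)" for t
  proof -
    have lim: "((\<lambda>k. (f (\<lambda>i. w t i + k i) - f (w t) - (\<Sum>i<p. g (w t) i * k i)) / l2 p k) \<longlongrightarrow> 0) (at (\<lambda>_. 0) within Rp p)"
      using td wR[of t] unfolding twice_diff_grad_hess_def by blast
    show ?thesis unfolding \<phi>_def \<psi>_def using dir_deriv[of f u t h "g (w t)" p, OF _ h nz] lim
      unfolding w_def by simp
  qed
  have d2: "(\<psi> has_field_derivative q t) (at t)" for t
  proof -
    have di: "((\<lambda>s. g (w s) i) has_field_derivative (\<Sum>j<p. H (w t) i j * h j)) (at t)" if i: "i < p" for i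
    proof -
      have lim: "((\<lambda>k. (g (\<lambda>j. w t j + k j) i - g (w t) i - (\<Sum>j<p. H (w t) i j * k j)) / l2 p k) \<longlongrightarrow> 0) (at (\<lambda>_. 0) within Rp p)"
        using td wR[of t] i unfolding twice_diff_grad_hess_def by blast
      show ?thesis using dir_deriv[of "\<lambda>x. g x i" u t h "H (w t) i" p, OF _ h nz] lim
        unfolding w_def by simp
    qed
    have "(\<psi> has_field_derivative (\<Sum>i<p. (\<Sum>j<p. H (w t) i j * h j) * h i)) (at t)"
      unfolding \<psi>_def by (intro DERIV_sum DERIV_cmult_right di) simp
    moreover have "(\<Sum>i<p. (\<Sum>j<p. H (w t) i j * h j) * h i) = q t"
      unfolding q_def by (simp add: sum_distrib_left sum_distrib_right algebra_simps)
    ultimately show ?thesis by simp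
  qed
  define diff where "diff = (\<lambda>m::nat. if m = 0 then \<phi> else if m = 1 then \<psi> else q)"
  have "\<exists>t. (if (1::real) < 0 then 1 < t \<and> t < 0 else 0 < t \<and> t < 1) \<and>
    \<phi> 1 = (\<Sum>m<2. (diff m 0 / fact m) * (1 - 0)^m) + (diff 2 t / fact 2) * (1 - 0)^2"
  proof (rule Taylor[of 2 diff \<phi> 0 1 0 1])
    show "\<forall>m t. m < 2 \<and> 0 \<le> t \<and> t \<le> 1 \<longrightarrow> (diff m has_field_derivative diff (Suc m) t) (at t)"
    proof (intro allI impI)
      fix m :: nat and t :: real assume "m < 2 \<and> 0 \<le> t \<and> t \<le> 1"
      then have "m = 0 \<or> m = 1" by auto
      then show "(diff m has_field_derivative diff (Suc m) t) (at t)"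
        using d1 d2 unfolding diff_def by auto
    qed
  qed (auto simp: diff_def)
  then obtain t where t: "0 < t" "t < 1" "\<phi> 1 = \<phi> 0 + \<psi> 0 + q t / 2"
    by (auto simp: diff_def numeral_2_eq_2)
  have "\<phi> 1 = f (\<lambda>i. u i + h i)" "\<phi> 0 = f u" "\<psi> 0 = (\<Sum>i<p. g u i * h i)"
    unfolding \<phi>_def \<psi>_def w_def by simp_all
  moreover have "lo \<le> q t \<and> q t \<le> hi" using q[of t] t unfolding q_def w_def by simp
  ultimately show ?thesis using t(3) by auto
qed

definition cov :: "(nat \<Rightarrow> nat set) \<Rightarrow> nat set \<Rightarrow> nat set" where
  "cov G I = (\<Union>i\<in>I. G i)"

lemma gsupp_card_le: "I \<subseteq> {..<M} \<Longrightarrow> S \<subseteq> cov G I \<Longrightarrow> gsupp_card G M S \<le> card I"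
  unfolding gsupp_card_def cov_def by (rule Least_le) auto

lemma gnorm0_le: "I \<subseteq> {..<M} \<Longrightarrow> (\<And>i. i \<notin> cov G I \<Longrightarrow> w i = 0) \<Longrightarrow> gnorm0 G M w \<le> card I"
  unfolding gnorm0_def by (rule gsupp_card_le) auto

lemma l2_zero_eq:
  assumes "u \<in> Rp p" "v \<in> Rp p" "l2 p (\<lambda>i. v i - u i) = 0" shows "v = u"
proof
  fix i show "v i = u i"
  proof (cases "i < p")
    case True
    have "(\<Sum>i<p. (v i - u i)\<^sup>2) = 0" using assms(3) unfolding l2_def by simp
    then have "\<forall>j\<in>{..<p}. (v j - u j)\<^sup>2 = 0" by (subst sum_nonneg_eq_0_iff[symmetric]) auto
    then show ?thesis using True by auto
  next
    case False then show ?thesis using assms(1,2) unfolding Rp_def by auto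
  qed
qed

lemma lohi:
  assumes td: "twice_diff_grad_hess p f g H"
  and rs: "rsc_rss p G M H K \<alpha> L"
  and I: "I \<subseteq> {..<M}" "card I \<le> K"
  and u: "u \<in> Rp p" and v: "v \<in> Rp p"
  and su: "\<And>i. i \<notin> cov G I \<Longrightarrow> u i = 0" and sv: "\<And>i. i \<notin> cov G I \<Longrightarrow> v i = 0"
  shows "f v \<ge> f u + (\<Sum>i<p. g u i * (v i - u i)) + \<alpha> / 2 * (l2 p (\<lambda>i. v i - u i))\<^sup>2
       \<and> f v \<le> f u + (\<Sum>i<p. g u i * (v i - u i)) + L / 2 * (l2 p (\<lambda>i. v i - u i))\<^sup>2"
proof (cases "l2 p (\<lambda>i. v i - u i) = 0")
  case True
  then have "v = u" using l2_zero_eq[OF u v] by simp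
  then show ?thesis by (simp add: l2_def)
next
  case False
  define h where "h = (\<lambda>i. v i - u i)"
  have h: "h \<in> Rp p" using u v unfolding Rp_def h_def by auto
  have q: "\<alpha> * (l2 p h)\<^sup>2 \<le> (\<Sum>i<p. \<Sum>j<p. h i * H (\<lambda>i. u i + t * h i) i j * h j)
             \<and> (\<Sum>i<p. \<Sum>j<p. h i * H (\<lambda>i. u i + t * h i) i j * h j) \<le> L * (l2 p h)\<^sup>2" for t
  proof -
    have "gnorm0 G M (\<lambda>i. u i + t * h i) \<le> card I"
      by (rule gnorm0_le[OF I(1)]) (simp add: su sv h_def)
    then have "gnorm0 G M (\<lambda>i. u i + t * h i) \<le> K" using I(2) by linarith
    then show ?thesis using rs Rp_comb[OF u h, of t] h unfolding rsc_rss_def by blast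
  qed
  have vv: "(\<lambda>i. u i + h i) = v" unfolding h_def by auto
  have q': "\<And>t. 0 \<le> t \<Longrightarrow> t \<le> 1 \<Longrightarrow> \<alpha> * (l2 p h)\<^sup>2 \<le> (\<Sum>i<p. \<Sum>j<p. h i * H (\<lambda>i. u i + t * h i) i j * h j)
             \<and> (\<Sum>i<p. \<Sum>j<p. h i * H (\<lambda>i. u i + t * h i) i j * h j) \<le> L * (l2 p h)\<^sup>2" using q by blast
  have nz: "l2 p h \<noteq> 0" using False unfolding h_def by simp
  show ?thesis using taylor2[OF td u h q' nz] vv unfolding h_def by simp
qed

lemma l2_sq: "(l2 p v)\<^sup>2 = (\<Sum>i<p. (v i)\<^sup>2)"
  unfolding l2_def by (simp add: sum_nonneg)

lemma td_Rp: "twice_diff_grad_hess p f g H \<Longrightarrow> x \<in> Rp p \<Longrightarrow> g x \<in> Rp p"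
  unfolding twice_diff_grad_hess_def by blast

lemma coco_half:
  assumes td: "twice_diff_grad_hess p f g H"
  and rs: "rsc_rss p G M H K \<alpha> L" and a: "0 < \<alpha>" and L: "0 < L"
  and I: "I \<subseteq> {..<M}" "card I \<le> K"
  and x: "x \<in> Rp p" and y: "y \<in> Rp p"
  and sx: "\<And>i. i \<notin> cov G I \<Longrightarrow> x i = 0" and sy: "\<And>i. i \<notin> cov G I \<Longrightarrow> y i = 0"
  shows "f y - f x - (\<Sum>i<p. g x i * (y i - x i)) \<ge> (\<Sum>i<p. (restr (cov G I) (\<lambda>i. g y i - g x i) i)\<^sup>2) / (2 * L)"
proof -
  define S where "S = cov G I"
  define \<delta> where "\<delta> = restr S (\<lambda>i. g y i - g x i)"
  define v where "v = (\<lambda>i. y i - \<delta> i / L)"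
  have gx: "g x \<in> Rp p" and gy: "g y \<in> Rp p" using td_Rp[OF td] x y by auto
  have vR: "v \<in> Rp p" using y gx gy unfolding v_def \<delta>_def restr_def Rp_def by auto
  have sv: "\<And>i. i \<notin> cov G I \<Longrightarrow> v i = 0" using sy unfolding v_def \<delta>_def restr_def S_def by auto
  have A: "f v \<ge> f x + (\<Sum>i<p. g x i * (v i - x i))"
  proof -
    have "f v \<ge> f x + (\<Sum>i<p. g x i * (v i - x i)) + \<alpha> / 2 * (l2 p (\<lambda>i. v i - x i))\<^sup>2"
      using lohi[OF td rs I x vR sx sv] by blast
    moreover have "\<alpha> / 2 * (l2 p (\<lambda>i. v i - x i))\<^sup>2 \<ge> 0" using a by simp
    ultimately show ?thesis by linarith
  qed
  have B: "f v \<le> f y + (\<Sum>i<p. g y i * (v i - y i)) + L / 2 * (l2 p (\<lambda>i. v i - y i))\<^sup>2"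
    using lohi[OF td rs I y vR sy sv] by blast
  have e1: "(\<Sum>i<p. g x i * (v i - x i)) = (\<Sum>i<p. g x i * (y i - x i)) - (\<Sum>i<p. g x i * \<delta> i) / L"
    unfolding v_def by (simp add: algebra_simps sum_subtractf sum.distrib sum_divide_distrib)
  have e2: "(\<Sum>i<p. g y i * (v i - y i)) = - (\<Sum>i<p. g y i * \<delta> i) / L"
    unfolding v_def by (simp add: algebra_simps sum_negf sum_divide_distrib)
  have e3: "L / 2 * (l2 p (\<lambda>i. v i - y i))\<^sup>2 = (\<Sum>i<p. (\<delta> i)\<^sup>2) / (2 * L)"
    unfolding l2_sq v_def using L by (simp add: power_divide sum_divide_distrib[symmetric] power2_eq_square)
  have e4: "(\<Sum>i<p. g y i * \<delta> i) - (\<Sum>i<p. g x i * \<delta> i) = (\<Sum>i<p. (\<delta> i)\<^sup>2)"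
    unfolding sum_subtractf[symmetric] by (rule sum.cong) (auto simp: \<delta>_def restr_def power2_eq_square algebra_simps)
  have "(\<Sum>i<p. (\<delta> i)\<^sup>2) / (2 * L) = ((\<Sum>i<p. g y i * \<delta> i) - (\<Sum>i<p. g x i * \<delta> i)) / L - (\<Sum>i<p. (\<delta> i)\<^sup>2) / (2 * L)"
    unfolding e4 using L by (simp add: field_simps)
  also have "\<dots> \<le> f y - f x - (\<Sum>i<p. g x i * (y i - x i))"
    using A B e1 e2 e3 by (simp add: diff_divide_distrib)
  finally show ?thesis unfolding \<delta>_def S_def .
qed

lemma contract:
  assumes td: "twice_diff_grad_hess p f g H"
  and rs: "rsc_rss p G M H K \<alpha> L" and a: "0 < \<alpha>" and L: "0 < L"
  and I: "I \<subseteq> {..<M}" "card I \<le> K"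
  and x: "x \<in> Rp p" and y: "y \<in> Rp p"
  and sx: "\<And>i. i \<notin> cov G I \<Longrightarrow> x i = 0" and sy: "\<And>i. i \<notin> cov G I \<Longrightarrow> y i = 0"
  shows "(\<Sum>i<p. (restr (cov G I) (\<lambda>i. (y i - x i) - (g y i - g x i) / L) i)\<^sup>2) \<le> (1 - \<alpha> / L) * (\<Sum>i<p. (y i - x i)\<^sup>2)"
proof -
  define S where "S = cov G I"
  define \<delta> where "\<delta> = restr S (\<lambda>i. g y i - g x i)"
  define D where "D = (\<Sum>i<p. (g y i - g x i) * (y i - x i))"
  define E where "E = (\<Sum>i<p. (y i - x i)\<^sup>2)"
  define Q where "Q = (\<Sum>i<p. (\<delta> i)\<^sup>2)"
  have h1: "f y - f x - (\<Sum>i<p. g x i * (y i - x i)) \<ge> Q / (2 * L)"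
    using coco_half[OF td rs a L I x y sx sy] unfolding Q_def \<delta>_def S_def .
  have h2: "f x - f y - (\<Sum>i<p. g y i * (x i - y i)) \<ge> (\<Sum>i<p. (restr S (\<lambda>i. g x i - g y i) i)\<^sup>2) / (2 * L)"
    using coco_half[OF td rs a L I y x sy sx] unfolding S_def .
  have "(\<Sum>i<p. (restr S (\<lambda>i. g x i - g y i) i)\<^sup>2) = Q"
    unfolding Q_def \<delta>_def restr_def by (rule sum.cong) (auto simp: power2_commute)
  then have h2': "f x - f y - (\<Sum>i<p. g y i * (x i - y i)) \<ge> Q / (2 * L)" using h2 by simp
  have "D = (f y - f x - (\<Sum>i<p. g x i * (y i - x i))) + (f x - f y - (\<Sum>i<p. g y i * (x i - y i)))"
    unfolding D_def by (simp add: algebra_simps sum_subtractf sum.distrib)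
  then have "D \<ge> Q / (2 * L) + Q / (2 * L)" using h1 h2' by linarith
  moreover have "Q / (2 * L) + Q / (2 * L) = Q / L" by (simp add: field_simps)
  ultimately have DQ: "D \<ge> Q / L" by simp
  have l1: "f y \<ge> f x + (\<Sum>i<p. g x i * (y i - x i)) + \<alpha> / 2 * E"
    using lohi[OF td rs I x y sx sy] unfolding l2_sq E_def by blast
  have l2: "f x \<ge> f y + (\<Sum>i<p. g y i * (x i - y i)) + \<alpha> / 2 * E"
  proof -
    have "(\<Sum>i<p. (x i - y i)\<^sup>2) = E" unfolding E_def by (rule sum.cong) (auto simp: power2_commute)
    then show ?thesis using lohi[OF td rs I y x sy sx] unfolding l2_sq by simp
  qed
  have DE: "D \<ge> \<alpha> * E"
  proof -
    have "D = (f y - f x - (\<Sum>i<p. g x i * (y i - x i))) + (f x - f y - (\<Sum>i<p. g y i * (x i - y i)))"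
      unfolding D_def by (simp add: algebra_simps sum_subtractf sum.distrib)
    then show ?thesis using l1 l2 by linarith
  qed
  have pw: "(restr S (\<lambda>i. (y i - x i) - (g y i - g x i) / L) i)\<^sup>2
      = (y i - x i)\<^sup>2 - 2 / L * ((g y i - g x i) * (y i - x i)) + (\<delta> i)\<^sup>2 / L\<^sup>2" for i
  proof (cases "i \<in> S")
    case True then show ?thesis unfolding \<delta>_def restr_def using L
      by (simp add: power2_eq_square field_simps)
  next
    case False then show ?thesis using sx sy unfolding \<delta>_def restr_def S_def by simp
  qed
  have "(\<Sum>i<p. (restr S (\<lambda>i. (y i - x i) - (g y i - g x i) / L) i)\<^sup>2) = E - 2 / L * D + Q / L\<^sup>2"
    unfolding pw E_def D_def Q_def by (simp add: sum.distrib sum_subtractf sum_distrib_left sum_divide_distrib)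
  also have "\<dots> \<le> E - D / L"
  proof -
    have "Q / L\<^sup>2 \<le> D / L" using DQ L by (simp add: field_simps power2_eq_square)
    then show ?thesis by (simp add: field_simps)
  qed
  also have "\<dots> \<le> (1 - \<alpha> / L) * E" using DE L by (simp add: field_simps)
  finally show ?thesis unfolding E_def S_def .
qed

lemma cov_fin: "finite K \<Longrightarrow> (\<forall>i\<in>K. finite (G i)) \<Longrightarrow> finite (cov G K)"
  unfolding cov_def by auto

lemma cov_mono: "K' \<subseteq> K \<Longrightarrow> cov G K' \<subseteq> cov G K"
  unfolding cov_def by auto

lemma remove_one:
  fixes z :: "nat \<Rightarrow> real"
  assumes fin: "finite K" "\<forall>i\<in>K. finite (G i)" and ne: "K \<noteq> {}"
  shows "\<exists>g\<in>K. (\<Sum>i\<in>cov G K - X. (z i)\<^sup>2) - (\<Sum>i\<in>cov G (K - {g}) - X. (z i)\<^sup>2)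
           \<le> (\<Sum>i\<in>cov G K - X. (z i)\<^sup>2) / card K"
proof (rule ccontr)
  define m where "m = (\<Sum>i\<in>cov G K - X. (z i)\<^sup>2)"
  define U where "U = (\<lambda>g. (cov G K - X) - cov G (K - {g}))"
  assume "\<not> ?thesis"
  then have big: "\<forall>g\<in>K. m / card K < m - (\<Sum>i\<in>cov G (K - {g}) - X. (z i)\<^sup>2)"
    unfolding m_def by auto
  have cf: "finite (cov G K)" using cov_fin[OF fin] .
  have loss: "m - (\<Sum>i\<in>cov G (K - {g}) - X. (z i)\<^sup>2) = (\<Sum>i\<in>U g. (z i)\<^sup>2)" for g
  proof -
    have sub: "cov G (K - {g}) - X \<subseteq> cov G K - X" using cov_mono[of "K - {g}" K G] by auto
    have e: "U g = (cov G K - X) - (cov G (K - {g}) - X)" unfolding U_def by auto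
    show ?thesis unfolding m_def e by (rule sum_diff[symmetric]) (use cf sub in auto)
  qed
  have disj: "pairwise (\<lambda>g g'. disjnt (U g) (U g')) K"
    unfolding pairwise_def disjnt_def
  proof (intro ballI impI)
    fix g g' assume g: "g \<in> K" and g': "g' \<in> K" and ne: "g \<noteq> g'"
    show "U g \<inter> U g' = {}"
    proof (rule ccontr)
      assume "U g \<inter> U g' \<noteq> {}"
      then obtain i where i: "i \<in> U g" "i \<in> U g'" by auto
      from i(1) have "i \<notin> G g'" using g' ne unfolding U_def cov_def by auto
      moreover from i(2) obtain j where "j \<in> K" "i \<in> G j" unfolding U_def cov_def by auto
      moreover from i(2) have "\<forall>j\<in>K - {g'}. i \<notin> G j" unfolding U_def cov_def by auto
      ultimately show False by auto
    qed
  qed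
  have Uf: "\<forall>g\<in>K. finite (U g)" unfolding U_def using cf by auto
  have "(\<Sum>g\<in>K. (\<Sum>i\<in>U g. (z i)\<^sup>2)) = (\<Sum>i\<in>(\<Union>g\<in>K. U g). (z i)\<^sup>2)"
    using sum.UNION_disjoint_family[OF fin(1) Uf, of "\<lambda>i. (z i)\<^sup>2"] disj
    unfolding pairwise_def disjnt_def disjoint_family_on_def by auto
  also have "\<dots> \<le> m" unfolding m_def
    by (rule sum_mono2) (use cf in \<open>auto simp: U_def\<close>)
  finally have le: "(\<Sum>g\<in>K. (\<Sum>i\<in>U g. (z i)\<^sup>2)) \<le> m" .
  have "(\<Sum>g\<in>K. m / card K) < (\<Sum>g\<in>K. (\<Sum>i\<in>U g. (z i)\<^sup>2))"
    using big loss by (intro sum_strict_mono fin ne) auto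
  moreover have "(\<Sum>g\<in>K. m / card K) = m" using fin ne by simp
  ultimately show False using le by linarith
qed

lemma remove_many:
  fixes z :: "nat \<Rightarrow> real"
  assumes fin: "finite K" "\<forall>i\<in>K. finite (G i)"
  shows "j < card K \<Longrightarrow> \<exists>K''. K'' \<subseteq> K \<and> card K'' = card K - j \<and>
     (\<Sum>i\<in>cov G K - X. (z i)\<^sup>2) - (\<Sum>i\<in>cov G K'' - X. (z i)\<^sup>2)
           \<le> real j * (\<Sum>i\<in>cov G K - X. (z i)\<^sup>2) / real (card K - j)"
proof (induction j)
  case 0 then show ?case by (intro exI[of _ K]) auto
next
  case (Suc j)
  define m where "m = (\<Sum>i\<in>cov G K - X. (z i)\<^sup>2)"
  define c where "c = card K"
  from Suc.prems have jc: "Suc j < c" unfolding c_def .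
  from Suc.IH[OF Suc_lessD[OF Suc.prems]] obtain Kj where Kj: "Kj \<subseteq> K" "card Kj = c - j"
    "m - (\<Sum>i\<in>cov G Kj - X. (z i)\<^sup>2) \<le> real j * m / real (c - j)" unfolding m_def c_def by auto
  have fKj: "finite Kj" using Kj(1) fin(1) finite_subset by auto
  have neKj: "Kj \<noteq> {}" using Kj(2) jc by auto
  obtain g where g: "g \<in> Kj" "(\<Sum>i\<in>cov G Kj - X. (z i)\<^sup>2) - (\<Sum>i\<in>cov G (Kj - {g}) - X. (z i)\<^sup>2)
           \<le> (\<Sum>i\<in>cov G Kj - X. (z i)\<^sup>2) / card Kj"
    using remove_one[OF fKj _ neKj, where X=X and z=z and G=G] fin(2) Kj(1) by blast
  have mono: "(\<Sum>i\<in>cov G Kj - X. (z i)\<^sup>2) \<le> m" unfolding m_def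
    by (rule sum_mono2) (use cov_fin[OF fin] cov_mono[OF Kj(1), of G] in auto)
  have cpos: "real (c - j) > 0" using jc by simp
  have "(\<Sum>i\<in>cov G Kj - X. (z i)\<^sup>2) / card Kj \<le> m / real (c - j)"
    unfolding Kj(2) using mono cpos by (simp add: divide_right_mono)
  then have "m - (\<Sum>i\<in>cov G (Kj - {g}) - X. (z i)\<^sup>2) \<le> real j * m / real (c - j) + m / real (c - j)"
  proof -
    have "m - (\<Sum>i\<in>cov G (Kj - {g}) - X. (z i)\<^sup>2) = (m - (\<Sum>i\<in>cov G Kj - X. (z i)\<^sup>2))
       + ((\<Sum>i\<in>cov G Kj - X. (z i)\<^sup>2) - (\<Sum>i\<in>cov G (Kj - {g}) - X. (z i)\<^sup>2))" by simp
    also have "\<dots> \<le> real j * m / real (c - j) + m / real (c - j)"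
      using Kj(3) g(2) \<open>(\<Sum>i\<in>cov G Kj - X. (z i)\<^sup>2) / card Kj \<le> m / real (c - j)\<close> by (intro add_mono) auto
    finally show ?thesis .
  qed
  also have "\<dots> = real (Suc j) * m / real (c - j)" by (simp add: add_divide_distrib algebra_simps)
  also have "\<dots> \<le> real (Suc j) * m / real (c - Suc j)"
  proof -
    have m0: "m \<ge> 0" unfolding m_def by (simp add: sum_nonneg)
    have "real (c - Suc j) > 0" "real (c - Suc j) \<le> real (c - j)" using jc by auto
    then show ?thesis using m0 by (intro divide_left_mono mult_nonneg_nonneg) auto
  qed
  finally have L: "m - (\<Sum>i\<in>cov G (Kj - {g}) - X. (z i)\<^sup>2) \<le> real (Suc j) * m / real (c - Suc j)" .
  show ?case
  proof (intro exI[of _ "Kj - {g}"] conjI)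
    show "Kj - {g} \<subseteq> K" using Kj(1) by auto
    show "card (Kj - {g}) = card K - Suc j" using Kj(2) g(1) fKj unfolding c_def by auto
  qed (use L in \<open>simp add: m_def c_def\<close>)
qed

lemma sq_split: "0 < \<eta> \<Longrightarrow> (a + b)\<^sup>2 \<le> (1 + \<eta>) * a\<^sup>2 + (1 + 1 / \<eta>) * (b::real)\<^sup>2"
proof -
  assume e: "0 < \<eta>"
  have "0 \<le> (\<eta> * a - b)\<^sup>2 / \<eta>" using e by simp
  also have "(\<eta> * a - b)\<^sup>2 / \<eta> = \<eta> * a\<^sup>2 - 2 * a * b + b\<^sup>2 / \<eta>"
    using e by (simp add: power2_eq_square field_simps)
  finally show ?thesis by (simp add: power2_eq_square algebra_simps)
qed

lemma alg_step:
  fixes u \<rho> E B A2 D :: real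
  assumes u: "0 < u" "u \<le> 1" and r: "0 \<le> \<rho>" "\<rho> \<le> u\<^sup>2 / 72"
    and nn: "0 \<le> E" "0 \<le> B" "0 \<le> A2"
    and D: "D \<le> (1 + u / 8 + (1 + 1 / (u / 8)) * \<rho>) * A2"
    and A: "A2 \<le> (1 + 3 * u / 8) * ((1 - u) * E) + (1 + 1 / (3 * u / 8)) * B"
  shows "D \<le> (1 - u / 4) * E + 5 * B / u"
proof -
  have e8: "1 + 1 / (u / 8) = 1 + 8 / u" by simp
  have "(1 + 1 / (u / 8)) * \<rho> \<le> (1 + 8 / u) * (u\<^sup>2 / 72)"
    unfolding e8 using r u by (intro mult_left_mono) auto
  also have "\<dots> = (u\<^sup>2 + 8 * u) / 72" using u by (simp add: field_simps power2_eq_square)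
  also have "\<dots> \<le> u / 8" using u by (simp add: field_simps power2_eq_square mult_left_le)
  finally have F: "1 + u / 8 + (1 + 1 / (u / 8)) * \<rho> \<le> 1 + u / 4" by simp
  have "D \<le> (1 + u / 4) * A2" using D F nn(3) by (meson mult_right_mono order_trans)
  also have "\<dots> \<le> (1 + u / 4) * ((1 + 3 * u / 8) * ((1 - u) * E) + (1 + 1 / (3 * u / 8)) * B)"
    using A u by (intro mult_left_mono) auto
  also have "\<dots> = ((1 + u / 4) * (1 + 3 * u / 8) * (1 - u)) * E + ((1 + u / 4) * (1 + 1 / (3 * u / 8))) * B"
    by (simp add: ring_distribs mult_ac)
  also have "\<dots> \<le> (1 - u / 4) * E + (5 / u) * B"
  proof (rule add_mono)
    have "(1 + u / 4) * (1 + 3 * u / 8) * (1 - u) = 1 - 3 * u / 8 - u * u * (17 / 32) - u * u * u * (3 / 32)"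
      by (simp add: field_simps)
    also have "\<dots> \<le> 1 - u / 4"
    proof -
      have "0 \<le> u * u" "0 \<le> u * u * u" using u by auto
      then show ?thesis using u by linarith
    qed
    finally show "((1 + u / 4) * (1 + 3 * u / 8) * (1 - u)) * E \<le> (1 - u / 4) * E"
      using nn(1) by (rule mult_right_mono)
    have "(1 + u / 4) * (1 + 1 / (3 * u / 8)) = 1 + u / 4 + 8 / (3 * u) + 2 / 3"
      using u by (simp add: field_simps)
    also have "\<dots> \<le> 5 / u"
    proof -
      have "1 \<le> 1 / u" "u / 4 \<le> 1 / (4 * u)" "2 / 3 \<le> 2 / (3 * u)" using u by (auto simp: field_simps mult_le_one)
      moreover have "1 / u + 1 / (4 * u) + 8 / (3 * u) + 2 / (3 * u) \<le> 5 / u" using u by (simp add: field_simps)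
      ultimately show ?thesis by linarith
    qed
    finally show "((1 + u / 4) * (1 + 1 / (3 * u / 8))) * B \<le> (5 / u) * B"
      using nn(2) by (rule mult_right_mono)
  qed
  finally show ?thesis by simp
qed

lemma groups_of:
  assumes grp2: "(\<Union>i<M. G i) = {..<p}" and w: "w \<in> Rp p" and k: "gnorm0 G M w \<le> k"
  shows "\<exists>I. I \<subseteq> {..<M} \<and> card I \<le> k \<and> (\<forall>i. i \<notin> cov G I \<longrightarrow> w i = 0)"
proof -
  let ?P = "\<lambda>m. \<exists>I. I \<subseteq> {..<M} \<and> card I = m \<and> {i. w i \<noteq> 0} \<subseteq> (\<Union>i\<in>I. G i)"
  have "{i. w i \<noteq> 0} \<subseteq> {..<p}" using w unfolding Rp_def by (auto simp: not_le[symmetric])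
  then have "?P M" using grp2 by (intro exI[of _ "{..<M}"]) auto
  then have "?P (LEAST m. ?P m)" by (rule LeastI)
  then obtain I where "I \<subseteq> {..<M}" "card I = gnorm0 G M w" "{i. w i \<noteq> 0} \<subseteq> (\<Union>i\<in>I. G i)"
    unfolding gnorm0_def gsupp_card_def by blast
  then show ?thesis using k unfolding cov_def by (intro exI[of _ I]) auto
qed

lemma cov_sub: "\<forall>i<M. G i \<subseteq> {..<p} \<Longrightarrow> I \<subseteq> {..<M} \<Longrightarrow> cov G I \<subseteq> {..<p}"
  unfolding cov_def by auto

lemma sum_restr: "A \<subseteq> {..<(p::nat)} \<Longrightarrow> (\<Sum>i<p. if i \<in> A then f i else 0) = (\<Sum>i\<in>A. f i)"
proof -
  assume A: "A \<subseteq> {..<p}"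
  have "(\<Sum>i<p. if i \<in> A then f i else 0) = sum f ({..<p} \<inter> A)"
    by (rule sum.inter_restrict[symmetric]) simp
  also have "{..<p} \<inter> A = A" using A by auto
  finally show ?thesis .
qed

lemma sum_restr2: "A \<subseteq> {..<p} \<Longrightarrow> (\<Sum>i<p. (restr A f i)\<^sup>2) = (\<Sum>i\<in>A. (f i)\<^sup>2)"
proof -
  assume A: "A \<subseteq> {..<p}"
  have "(\<Sum>i<p. (restr A f i)\<^sup>2) = (\<Sum>i<p. if i \<in> A then (f i)\<^sup>2 else 0)"
    by (rule sum.cong) (auto simp: restr_def)
  then show ?thesis using sum_restr[OF A] by simp
qed

lemma restr_err: "A \<subseteq> {..<p} \<Longrightarrow> (\<Sum>i<p. (restr A z i - z i)\<^sup>2) = (\<Sum>i<p. (z i)\<^sup>2) - (\<Sum>i\<in>A. (z i)\<^sup>2)"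
proof -
  assume A: "A \<subseteq> {..<p}"
  have "(\<Sum>i<p. (restr A z i - z i)\<^sup>2) = (\<Sum>i<p. (z i)\<^sup>2 - (if i \<in> A then (z i)\<^sup>2 else 0))"
    by (rule sum.cong) (auto simp: restr_def)
  then show ?thesis using sum_restr[OF A] by (simp add: sum_subtractf)
qed

lemma gnorm0_restr: "I \<subseteq> {..<M} \<Longrightarrow> gnorm0 G M (restr (cov G I) z) \<le> card I"
  by (rule gnorm0_le) (auto simp: restr_def)

lemma Rp_restr: "A \<subseteq> {..<p} \<Longrightarrow> restr A z \<in> Rp p"
  unfolding Rp_def restr_def by auto

lemma proj_form:
  assumes grp: "\<forall>i<M. G i \<subseteq> {..<p}"
  and P: "P \<in> proj_set p G M k z" and K: "K \<subseteq> {..<M}" "card K \<le> k"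
  and sP: "\<And>i. i \<notin> cov G K \<Longrightarrow> P i = 0"
  shows "P = restr (cov G K) z"
proof -
  define C where "C = cov G K"
  have Cp: "C \<subseteq> {..<p}" unfolding C_def by (rule cov_sub[OF grp K(1)])
  define Q where "Q = restr C z"
  have QR: "Q \<in> Rp p" unfolding Q_def by (rule Rp_restr[OF Cp])
  have Qg: "gnorm0 G M Q \<le> k" unfolding Q_def C_def using gnorm0_restr[OF K(1)] K(2) le_trans by blast
  have opt: "(l2 p (\<lambda>i. P i - z i))\<^sup>2 \<le> (l2 p (\<lambda>i. Q i - z i))\<^sup>2"
    using P QR Qg unfolding proj_set_def by blast
  have pw: "(P i - z i)\<^sup>2 = (Q i - z i)\<^sup>2 + (if i \<in> C then (P i - z i)\<^sup>2 else 0)" for i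
    using sP[of i] unfolding Q_def restr_def C_def by auto
  have "(\<Sum>i<p. (P i - z i)\<^sup>2) = (\<Sum>i<p. (Q i - z i)\<^sup>2 + (if i \<in> C then (P i - z i)\<^sup>2 else 0))"
    by (rule sum.cong[OF refl pw])
  also have "\<dots> = (\<Sum>i<p. (Q i - z i)\<^sup>2) + (\<Sum>i<p. if i \<in> C then (P i - z i)\<^sup>2 else 0)"
    by (rule sum.distrib)
  finally have "(\<Sum>i<p. (P i - z i)\<^sup>2) = (\<Sum>i<p. (Q i - z i)\<^sup>2) + (\<Sum>i<p. if i \<in> C then (P i - z i)\<^sup>2 else 0)" .
  then have z0: "(\<Sum>i<p. if i \<in> C then (P i - z i)\<^sup>2 else 0) \<le> 0" using opt unfolding l2_sq by simp
  have z1: "(\<Sum>i<p. if i \<in> C then (P i - z i)\<^sup>2 else 0) = 0"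
  proof -
    have "(\<Sum>i<p. if i \<in> C then (P i - z i)\<^sup>2 else 0) \<ge> 0" by (rule sum_nonneg) auto
    then show ?thesis using z0 by linarith
  qed
  have eq: "P i = z i" if i: "i \<in> C" for i
  proof -
    have "i < p" using i Cp by auto
    then have "(if i \<in> C then (P i - z i)\<^sup>2 else 0) = 0"
      using z1 by (subst (asm) sum_nonneg_eq_0_iff) auto
    then show ?thesis using i by simp
  qed
  show ?thesis
  proof
    fix i show "P i = restr (cov G K) z i" using eq sP unfolding restr_def C_def by auto
  qed
qed

lemma proj_mass:
  assumes grp: "\<forall>i<M. G i \<subseteq> {..<p}" and kk: "kstar < k"
  and P: "P \<in> proj_set p G M k z" and K: "K \<subseteq> {..<M}" "card K \<le> k"
  and Pf: "P = restr (cov G K) z"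
  and Is: "Is \<subseteq> {..<M}" "card Is \<le> kstar"
  shows "(\<Sum>i\<in>cov G Is - cov G K. (z i)\<^sup>2) \<le> real kstar / real (k - kstar) * (\<Sum>i\<in>cov G K - cov G Is. (z i)\<^sup>2)"
proof -
  define C where "C = cov G K"
  define X where "X = cov G Is"
  define \<rho> where "\<rho> = real kstar / real (k - kstar)"
  define m where "m = (\<lambda>A. \<Sum>i\<in>A. (z i)\<^sup>2)"
  have Cp: "C \<subseteq> {..<p}" unfolding C_def by (rule cov_sub[OF grp K(1)])
  have Xp: "X \<subseteq> {..<p}" unfolding X_def by (rule cov_sub[OF grp Is(1)])
  have fK: "finite K" using K(1) finite_subset by blast
  have fG: "\<forall>i\<in>K. finite (G i)" using K(1) grp by (meson finite_lessThan finite_subset lessThan_iff subsetD)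
  have r0: "\<rho> \<ge> 0" unfolding \<rho>_def by simp
  have m0: "m A \<ge> 0" for A unfolding m_def by (simp add: sum_nonneg)
  obtain K'' where K'': "K'' \<subseteq> K" "card K'' + kstar \<le> k" "m (C - X) - m (cov G K'' - X) \<le> \<rho> * m (C - X)"
  proof (cases "card K + kstar \<le> k")
    case True
    then show ?thesis using that[of K] r0 m0[of "C - X"] unfolding C_def by auto
  next
    case False
    define j where "j = card K + kstar - k"
    have j: "j < card K" "j \<le> kstar" "card K - j = k - kstar" using False kk K(2) unfolding j_def by auto
    obtain K1 where K1: "K1 \<subseteq> K" "card K1 = card K - j"
      "m (C - X) - m (cov G K1 - X) \<le> real j * m (C - X) / real (card K - j)"
      using remove_many[OF fK fG j(1), where X=X and z=z] unfolding m_def C_def by blast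
    have "real j * m (C - X) / real (card K - j) \<le> \<rho> * m (C - X)"
      unfolding \<rho>_def j(3) using j(2) m0[of "C - X"] by (simp add: divide_right_mono mult_right_mono field_simps)
    then show ?thesis using that[of K1] K1 j by auto
  qed
  have fK'': "finite K''" using K''(1) fK finite_subset by blast
  define C' where "C' = cov G (K'' \<union> Is)"
  have KI: "K'' \<union> Is \<subseteq> {..<M}" using K''(1) K(1) Is(1) by auto
  have C'p: "C' \<subseteq> {..<p}" unfolding C'_def by (rule cov_sub[OF grp KI])
  have cKI: "card (K'' \<union> Is) \<le> k" using card_Un_le[of K'' Is] K''(2) Is(2) by linarith
  have QR: "restr C' z \<in> Rp p" by (rule Rp_restr[OF C'p])
  have Qg: "gnorm0 G M (restr C' z) \<le> k" unfolding C'_def using gnorm0_restr[OF KI] cKI le_trans by blast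
  have opt: "(l2 p (\<lambda>i. P i - z i))\<^sup>2 \<le> (l2 p (\<lambda>i. restr C' z i - z i))\<^sup>2"
    using P QR Qg unfolding proj_set_def by blast
  then have "m C' \<le> m C" unfolding l2_sq Pf restr_err[OF C'p] restr_err[OF Cp[unfolded C_def]] m_def C_def by simp
  moreover have "m C' = m X + m (cov G K'' - X)"
  proof -
    have e: "C' = X \<union> (cov G K'' - X)" unfolding C'_def X_def cov_def by auto
    have "finite X" "finite (cov G K'' - X)" using Xp cov_sub[OF grp, of K''] K''(1) K(1)
      by (auto intro: finite_subset)
    then have "m (X \<union> (cov G K'' - X)) = m X + m (cov G K'' - X)" unfolding m_def
      by (intro sum.union_disjoint) auto
    then show ?thesis unfolding e .
  qed
  moreover have "m C = m (C \<inter> X) + m (C - X)" unfolding m_def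
    using sum.Int_Diff[of C _ X] Cp finite_subset by blast
  moreover have "m X = m (C \<inter> X) + m (X - C)" unfolding m_def
    using sum.Int_Diff[of X _ C] Xp finite_subset by (metis Int_commute finite_lessThan)
  ultimately have "m (X - C) \<le> m (C - X) - m (cov G K'' - X)" by linarith
  also have "\<dots> \<le> \<rho> * m (C - X)" using K''(3) .
  finally show ?thesis unfolding m_def \<rho>_def C_def X_def .
qed

lemma sum_Un3_le:
  fixes f :: "nat \<Rightarrow> real"
  assumes "finite A" "finite B" "finite C" "\<And>i. f i \<ge> 0"
  shows "(\<Sum>i\<in>A \<union> B \<union> C. f i) \<le> (\<Sum>i\<in>A. f i) + (\<Sum>i\<in>B. f i) + (\<Sum>i\<in>C. f i)"
proof -
  have "(\<Sum>i\<in>A \<union> B \<union> C. f i) \<le> (\<Sum>i\<in>A \<union> B. f i) + (\<Sum>i\<in>C. f i)"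
    using sum_Un[of "A \<union> B" C f] assms by (simp add: sum_nonneg)
  also have "(\<Sum>i\<in>A \<union> B. f i) \<le> (\<Sum>i\<in>A. f i) + (\<Sum>i\<in>B. f i)"
    using sum_Un[of A B f] assms by (simp add: sum_nonneg)
  finally show ?thesis by simp
qed

lemma step:
  assumes grp: "\<forall>i<M. G i \<subseteq> {..<p}" "(\<Union>i<M. G i) = {..<p}"
  and td: "twice_diff_grad_hess p f g H"
  and rs: "rsc_rss p G M H (2 * k + kstar) \<alpha> L" and a: "0 < \<alpha>" and aL: "\<alpha> \<le> L"
  and kk: "73 * real kstar \<le> (\<alpha> / L)\<^sup>2 * real k" and ks: "0 < kstar"
  and wsR: "wstar \<in> Rp p" and wsg: "gnorm0 G M wstar \<le> kstar"
  and xR: "x \<in> Rp p" and xg: "gnorm0 G M x \<le> k"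
  and P: "P \<in> proj_set p G M k (\<lambda>i. x i - (1 / L) * g x i)"
  and Gam: "\<And>S. S \<subseteq> {..<p} \<Longrightarrow> gsupp_card G M S \<le> k \<Longrightarrow> (\<Sum>i\<in>S. (g wstar i)\<^sup>2) \<le> \<Gamma>2"
  shows "(l2 p (\<lambda>i. P i - wstar i))\<^sup>2 \<le> (1 - (\<alpha> / L) / 4) * (l2 p (\<lambda>i. x i - wstar i))\<^sup>2
           + 5 * (3 * \<Gamma>2 / L\<^sup>2) / (\<alpha> / L)"
proof -
  define u where "u = \<alpha> / L"
  have L: "0 < L" using a aL by linarith
  have u: "0 < u" "u \<le> 1" unfolding u_def using a aL L by auto
  define z where "z = (\<lambda>i. x i - (1 / L) * g x i)"
  have PR: "P \<in> Rp p" and Pg: "gnorm0 G M P \<le> k" using P unfolding proj_set_def by auto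
  obtain K where K: "K \<subseteq> {..<M}" "card K \<le> k" and sP: "\<And>i. i \<notin> cov G K \<Longrightarrow> P i = 0"
    using groups_of[OF grp(2) PR Pg] by blast
  obtain Kt where Kt: "Kt \<subseteq> {..<M}" "card Kt \<le> k" and sx: "\<And>i. i \<notin> cov G Kt \<Longrightarrow> x i = 0"
    using groups_of[OF grp(2) xR xg] by blast
  obtain Is where Is: "Is \<subseteq> {..<M}" "card Is \<le> kstar" and sw: "\<And>i. i \<notin> cov G Is \<Longrightarrow> wstar i = 0"
    using groups_of[OF grp(2) wsR wsg] by blast
  define C where "C = cov G K"
  define Ct where "Ct = cov G Kt"
  define X where "X = cov G Is"
  define I where "I = K \<union> Kt \<union> Is"
  define S where "S = cov G I"
  have S_eq: "S = C \<union> Ct \<union> X" unfolding S_def I_def C_def Ct_def X_def cov_def by auto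
  have I: "I \<subseteq> {..<M}" using K Kt Is unfolding I_def by auto
  have cI: "card I \<le> 2 * k + kstar"
  proof -
    have "card I \<le> card (K \<union> Kt) + card Is" unfolding I_def by (rule card_Un_le)
    also have "\<dots> \<le> card K + card Kt + card Is" using card_Un_le[of K Kt] by simp
    finally show ?thesis using K(2) Kt(2) Is(2) by linarith
  qed
  have Cp: "C \<subseteq> {..<p}" unfolding C_def by (rule cov_sub[OF grp(1) K(1)])
  have Ctp: "Ct \<subseteq> {..<p}" unfolding Ct_def by (rule cov_sub[OF grp(1) Kt(1)])
  have Xp: "X \<subseteq> {..<p}" unfolding X_def by (rule cov_sub[OF grp(1) Is(1)])
  have Sp: "S \<subseteq> {..<p}" unfolding S_def by (rule cov_sub[OF grp(1) I])
  have fC: "finite C" "finite Ct" "finite X" "finite S" using Cp Ctp Xp Sp finite_subset by blast+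
  have kpos: "kstar < k"
  proof -
    have "u\<^sup>2 \<le> 1" using u by (simp add: power_le_one)
    then have "(\<alpha> / L)\<^sup>2 * real k \<le> real k" unfolding u_def by (simp add: mult_left_le_one_le)
    then show ?thesis using kk ks by linarith
  qed
  define \<rho> where "\<rho> = real kstar / real (k - kstar)"
  have r0: "0 \<le> \<rho>" unfolding \<rho>_def by simp
  have r1: "\<rho> \<le> u\<^sup>2 / 72"
  proof -
    have kpos': "real (k - kstar) > 0" using kpos by simp
    have "u\<^sup>2 * real kstar \<le> real kstar" using u ks by (simp add: power_le_one mult_left_le_one_le)
    then have "72 * real kstar \<le> u\<^sup>2 * real (k - kstar)" using kk kpos unfolding u_def
      by (simp add: of_nat_diff right_diff_distrib)
    then show ?thesis unfolding \<rho>_def using kpos' by (simp add: field_simps)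
  qed
  have Pf: "P = restr C z" unfolding C_def z_def by (rule proj_form[OF grp(1) P K sP])
  have mass: "(\<Sum>i\<in>X - C. (z i)\<^sup>2) \<le> \<rho> * (\<Sum>i\<in>C - X. (z i)\<^sup>2)"
    using proj_mass[OF grp(1) kpos P K Pf[unfolded C_def z_def] Is] unfolding \<rho>_def C_def X_def z_def .
  define a2 where "a2 = (\<Sum>i\<in>S. (z i - wstar i)\<^sup>2)"
  have a20: "a2 \<ge> 0" unfolding a2_def by (simp add: sum_nonneg)
  have mCX: "(\<Sum>i\<in>C - X. (z i)\<^sup>2) \<le> a2"
  proof -
    have "(\<Sum>i\<in>C - X. (z i)\<^sup>2) = (\<Sum>i\<in>C - X. (z i - wstar i)\<^sup>2)"
      by (rule sum.cong) (auto simp: sw X_def)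
    also have "\<dots> \<le> a2" unfolding a2_def by (rule sum_mono2) (use fC S_eq in auto)
    finally show ?thesis .
  qed
  define \<eta> where "\<eta> = u / 8"
  have eta: "0 < \<eta>" unfolding \<eta>_def using u by simp
  have pwd: "(P i - wstar i)\<^sup>2 \<le> (1 + \<eta>) * (if i \<in> S then (z i - wstar i)\<^sup>2 else 0)
      + (1 + 1 / \<eta>) * (if i \<in> X - C then (z i)\<^sup>2 else 0)" for i
  proof (cases "i \<in> C")
    case True
    then have "i \<in> S" by (simp add: S_eq)
    moreover have "0 \<le> \<eta> * (z i - wstar i)\<^sup>2" using eta by simp
    ultimately show ?thesis using True by (simp add: Pf restr_def ring_distribs)
  next
    case False
    show ?thesis
    proof (cases "i \<in> X")
      case True
      have "(wstar i)\<^sup>2 \<le> (1 + \<eta>) * (wstar i - z i)\<^sup>2 + (1 + 1 / \<eta>) * (z i)\<^sup>2"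
        using sq_split[OF eta, of "wstar i - z i" "z i"] by simp
      moreover have "(wstar i - z i)\<^sup>2 = (z i - wstar i)\<^sup>2" by (simp add: power2_commute)
      ultimately show ?thesis using True False by (simp add: Pf restr_def S_eq)
    next
      case False2: False
      then show ?thesis using False sw[of i] eta by (simp add: Pf restr_def X_def)
    qed
  qed
  have D1: "(l2 p (\<lambda>i. P i - wstar i))\<^sup>2 \<le> (1 + \<eta>) * a2 + (1 + 1 / \<eta>) * (\<Sum>i\<in>X - C. (z i)\<^sup>2)"
  proof -
    have "(l2 p (\<lambda>i. P i - wstar i))\<^sup>2 \<le> (\<Sum>i<p. (1 + \<eta>) * (if i \<in> S then (z i - wstar i)\<^sup>2 else 0)
      + (1 + 1 / \<eta>) * (if i \<in> X - C then (z i)\<^sup>2 else 0))"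
      unfolding l2_sq by (rule sum_mono) (rule pwd)
    also have "\<dots> = (1 + \<eta>) * (\<Sum>i<p. if i \<in> S then (z i - wstar i)\<^sup>2 else 0)
      + (1 + 1 / \<eta>) * (\<Sum>i<p. if i \<in> X - C then (z i)\<^sup>2 else 0)"
      by (simp only: sum.distrib sum_distrib_left)
    also have "(\<Sum>i<p. if i \<in> S then (z i - wstar i)\<^sup>2 else 0) = a2"
      unfolding a2_def by (rule sum_restr[OF Sp])
    also have "(\<Sum>i<p. if i \<in> X - C then (z i)\<^sup>2 else 0) = (\<Sum>i\<in>X - C. (z i)\<^sup>2)"
      by (rule sum_restr) (use Xp in auto)
    finally show ?thesis .
  qed
  have D2: "(l2 p (\<lambda>i. P i - wstar i))\<^sup>2 \<le> (1 + u / 8 + (1 + 1 / (u / 8)) * \<rho>) * a2"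
  proof -
    have "(1 + 1 / \<eta>) * (\<Sum>i\<in>X - C. (z i)\<^sup>2) \<le> (1 + 1 / \<eta>) * (\<rho> * a2)"
      using mass mCX r0 eta by (intro mult_left_mono) (auto intro: order_trans mult_left_mono)
    then show ?thesis using D1 unfolding \<eta>_def by (simp add: algebra_simps)
  qed
  define \<mu> where "\<mu> = 3 * u / 8"
  have mu: "0 < \<mu>" unfolding \<mu>_def using u by simp
  define E where "E = (\<Sum>i<p. (x i - wstar i)\<^sup>2)"
  define B1 where "B1 = (\<Sum>i\<in>S. ((x i - wstar i) - (g x i - g wstar i) / L)\<^sup>2)"
  define B2 where "B2 = (\<Sum>i\<in>S. (g wstar i / L)\<^sup>2)"
  have A1: "a2 \<le> (1 + \<mu>) * B1 + (1 + 1 / \<mu>) * B2"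
  proof -
    have "a2 \<le> (\<Sum>i\<in>S. (1 + \<mu>) * ((x i - wstar i) - (g x i - g wstar i) / L)\<^sup>2 + (1 + 1 / \<mu>) * (- (g wstar i / L))\<^sup>2)"
      unfolding a2_def
    proof (rule sum_mono)
      fix i
      have "z i - wstar i = ((x i - wstar i) - (g x i - g wstar i) / L) + (- (g wstar i / L))"
        unfolding z_def by (simp add: algebra_simps diff_divide_distrib)
      then show "(z i - wstar i)\<^sup>2 \<le> (1 + \<mu>) * ((x i - wstar i) - (g x i - g wstar i) / L)\<^sup>2 + (1 + 1 / \<mu>) * (- (g wstar i / L))\<^sup>2"
        using sq_split[OF mu] by metis
    qed
    also have "\<dots> = (1 + \<mu>) * B1 + (1 + 1 / \<mu>) * B2"
      unfolding B1_def B2_def by (simp add: sum.distrib sum_distrib_left)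
    finally show ?thesis .
  qed
  have sxS: "\<And>i. i \<notin> cov G I \<Longrightarrow> x i = 0" using sx unfolding I_def cov_def by auto
  have swS: "\<And>i. i \<notin> cov G I \<Longrightarrow> wstar i = 0" using sw unfolding I_def cov_def by auto
  have B1le: "B1 \<le> (1 - u) * E"
  proof -
    have "B1 = (\<Sum>i<p. (restr (cov G I) (\<lambda>i. (x i - wstar i) - (g x i - g wstar i) / L) i)\<^sup>2)"
      unfolding B1_def S_def using sum_restr2[OF Sp[unfolded S_def]] by simp
    also have "\<dots> \<le> (1 - \<alpha> / L) * E" unfolding E_def
      by (rule contract[OF td rs a L I cI wsR xR swS sxS])
    finally show ?thesis unfolding u_def .
  qed
  have B2le: "B2 \<le> 3 * \<Gamma>2 / L\<^sup>2"
  proof -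
    have g1: "(\<Sum>i\<in>C. (g wstar i)\<^sup>2) \<le> \<Gamma>2"
      using Gam[OF Cp] gsupp_card_le[OF K(1), of C G] K(2) unfolding C_def by auto
    have g2: "(\<Sum>i\<in>Ct. (g wstar i)\<^sup>2) \<le> \<Gamma>2"
      using Gam[OF Ctp] gsupp_card_le[OF Kt(1), of Ct G] Kt(2) unfolding Ct_def by auto
    have g3: "(\<Sum>i\<in>X. (g wstar i)\<^sup>2) \<le> \<Gamma>2"
      using Gam[OF Xp] gsupp_card_le[OF Is(1), of X G] Is(2) kpos unfolding X_def by auto
    have "(\<Sum>i\<in>S. (g wstar i)\<^sup>2) \<le> 3 * \<Gamma>2"
      using sum_Un3_le[OF fC(1) fC(2) fC(3), of "\<lambda>i. (g wstar i)\<^sup>2"] g1 g2 g3 unfolding S_eq by simp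
    moreover have "B2 = (\<Sum>i\<in>S. (g wstar i)\<^sup>2) / L\<^sup>2"
      unfolding B2_def by (simp add: power_divide sum_divide_distrib)
    ultimately show ?thesis using L by (simp add: divide_right_mono)
  qed
  have G0: "0 \<le> 3 * \<Gamma>2 / L\<^sup>2"
  proof -
    have "0 \<le> (\<Sum>i\<in>C. (g wstar i)\<^sup>2)" by (simp add: sum_nonneg)
    also have "\<dots> \<le> \<Gamma>2" using Gam[OF Cp] gsupp_card_le[OF K(1), of C G] K(2) unfolding C_def by auto
    finally show ?thesis by simp
  qed
  have E0: "0 \<le> E" unfolding E_def by (simp add: sum_nonneg)
  have A2: "a2 \<le> (1 + 3 * u / 8) * ((1 - u) * E) + (1 + 1 / (3 * u / 8)) * (3 * \<Gamma>2 / L\<^sup>2)"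
  proof -
    have "(1 + \<mu>) * B1 \<le> (1 + \<mu>) * ((1 - u) * E)" using B1le mu by (intro mult_left_mono) auto
    moreover have "(1 + 1 / \<mu>) * B2 \<le> (1 + 1 / \<mu>) * (3 * \<Gamma>2 / L\<^sup>2)" using B2le mu by (intro mult_left_mono) auto
    ultimately show ?thesis using A1 unfolding \<mu>_def by linarith
  qed
  have "(l2 p (\<lambda>i. P i - wstar i))\<^sup>2 \<le> (1 - u / 4) * E + 5 * (3 * \<Gamma>2 / L\<^sup>2) / u"
    by (rule alg_step[OF u r0 r1 E0 G0 a20 D2 A2])
  then show ?thesis unfolding u_def E_def l2_sq .
qed

lemma exp_bound: "0 \<le> (x::real) \<Longrightarrow> x\<^sup>2 * exp (- 2 * x) \<le> 1"
proof -
  assume x: "0 \<le> x"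
  have "x \<le> exp x" using exp_ge_add_one_self[of x] by linarith
  then have "x\<^sup>2 \<le> (exp x)\<^sup>2" using x by (intro power_mono) auto
  also have "(exp x)\<^sup>2 = exp (2 * x)" by (simp add: power2_eq_square exp_add[symmetric])
  finally have "x\<^sup>2 \<le> exp (2 * x)" .
  then have "x\<^sup>2 * exp (- 2 * x) \<le> exp (2 * x) * exp (- 2 * x)" by (intro mult_right_mono) auto
  also have "\<dots> = 1" by (simp add: exp_add[symmetric])
  finally show ?thesis .
qed

lemma l2_nonneg: "0 \<le> l2 p v" unfolding l2_def by (simp add: sum_nonneg)

lemma gsupp_empty: "gsupp_card G M {} = 0"
  using gsupp_card_le[of "{}" M "{}" G] by simp

theorem theorem3:
  "\<exists>C1>0. \<exists>C2>0. \<forall>(p::nat) (G::nat \<Rightarrow> nat set) (M::nat)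
      (f::(nat \<Rightarrow> real) \<Rightarrow> real) g H (kstar::nat) (k::nat) wstar \<alpha> L
      (ws::nat \<Rightarrow> nat \<Rightarrow> real) (\<epsilon>::real) (T::nat).
     (\<forall>i<M. G i \<subseteq> {..<p}) \<and> (\<Union>i<M. G i) = {..<p} \<and>
     twice_diff_grad_hess p f g H \<and>
     0 < kstar \<and>
     wstar \<in> Rp p \<and> gnorm0 G M wstar \<le> kstar \<and>
     (\<forall>u\<in>Rp p. gnorm0 G M u \<le> kstar \<longrightarrow> f wstar \<le> f u) \<and>
     real k \<ge> C1 * (L / \<alpha>)\<^sup>2 * real kstar \<and>
     0 < \<alpha> \<and> rsc_rss p G M H (2 * k + kstar) \<alpha> L \<and>
     ws 0 = (\<lambda>_. 0) \<and>
     (\<forall>t. ws (Suc t) \<in> proj_set p G M k (\<lambda>i. ws t i - (1 / L) * g (ws t) i)) \<and>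
     0 < \<epsilon> \<and> real T \<ge> C2 * (L / \<alpha>) * (l2 p wstar / \<epsilon>)
     \<longrightarrow> l2 p (\<lambda>i. ws T i - wstar i)
           \<le> \<epsilon> + 10 * L / \<alpha> *
              (2 / L * Max {l2 p (restr S (g wstar)) | S. S \<subseteq> {..<p} \<and> gsupp_card G M S \<le> k})"
proof (rule exI[of _ 73], rule conjI, simp, rule exI[of _ 8], rule conjI, simp, intro allI impI)
  fix p :: nat and G :: "nat \<Rightarrow> nat set" and M :: nat and f :: "(nat \<Rightarrow> real) \<Rightarrow> real"
    and g H and kstar k :: nat and wstar and \<alpha> L :: real and ws :: "nat \<Rightarrow> nat \<Rightarrow> real"
    and \<epsilon> :: real and T :: nat
  assume hyp: "(\<forall>i<M. G i \<subseteq> {..<p}) \<and> (\<Union>i<M. G i) = {..<p} \<and>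
     twice_diff_grad_hess p f g H \<and>
     0 < kstar \<and>
     wstar \<in> Rp p \<and> gnorm0 G M wstar \<le> kstar \<and>
     (\<forall>u\<in>Rp p. gnorm0 G M u \<le> kstar \<longrightarrow> f wstar \<le> f u) \<and>
     real k \<ge> 73 * (L / \<alpha>)\<^sup>2 * real kstar \<and>
     0 < \<alpha> \<and> rsc_rss p G M H (2 * k + kstar) \<alpha> L \<and>
     ws 0 = (\<lambda>_. 0) \<and>
     (\<forall>t. ws (Suc t) \<in> proj_set p G M k (\<lambda>i. ws t i - (1 / L) * g (ws t) i)) \<and>
     0 < \<epsilon> \<and> real T \<ge> 8 * (L / \<alpha>) * (l2 p wstar / \<epsilon>)"
  then have grp: "\<forall>i<M. G i \<subseteq> {..<p}" "(\<Union>i<M. G i) = {..<p}"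
    and td: "twice_diff_grad_hess p f g H" and ks: "0 < kstar"
    and wsR: "wstar \<in> Rp p" and wsg: "gnorm0 G M wstar \<le> kstar"
    and kk0: "real k \<ge> 73 * (L / \<alpha>)\<^sup>2 * real kstar"
    and a: "0 < \<alpha>" and rs: "rsc_rss p G M H (2 * k + kstar) \<alpha> L"
    and ws0: "ws 0 = (\<lambda>_. 0)"
    and wsS: "\<And>t. ws (Suc t) \<in> proj_set p G M k (\<lambda>i. ws t i - (1 / L) * g (ws t) i)"
    and eps: "0 < \<epsilon>" and T: "real T \<ge> 8 * (L / \<alpha>) * (l2 p wstar / \<epsilon>)"
    by blast+
  define Sset where "Sset = {l2 p (restr S (g wstar)) | S. S \<subseteq> {..<p} \<and> gsupp_card G M S \<le> k}"
  define \<Gamma> where "\<Gamma> = Max Sset"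
  have finS: "finite Sset"
  proof -
    have "Sset \<subseteq> (\<lambda>S. l2 p (restr S (g wstar))) ` Pow {..<p}" unfolding Sset_def by auto
    then show ?thesis by (rule finite_subset) simp
  qed
  have inS: "l2 p (restr S (g wstar)) \<le> \<Gamma>" if "S \<subseteq> {..<p}" "gsupp_card G M S \<le> k" for S
    unfolding \<Gamma>_def by (rule Max_ge[OF finS]) (use that in \<open>auto simp: Sset_def\<close>)
  have G0: "0 \<le> \<Gamma>" using inS[of "{}"] l2_nonneg[of p "restr {} (g wstar)"] gsupp_empty[of G M] by simp
  have Gam: "(\<Sum>i\<in>S. (g wstar i)\<^sup>2) \<le> \<Gamma>\<^sup>2" if "S \<subseteq> {..<p}" "gsupp_card G M S \<le> k" for S
  proof -
    have "(l2 p (restr S (g wstar)))\<^sup>2 \<le> \<Gamma>\<^sup>2"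
      using inS[OF that] l2_nonneg by (intro power_mono) auto
    then show ?thesis unfolding l2_sq sum_restr2[OF that(1)] .
  qed
  have RHS: "\<epsilon> + 10 * L / \<alpha> * (2 / L * Max Sset) = \<epsilon> + 20 * \<Gamma> / \<alpha>" if "L \<noteq> 0"
    using that unfolding \<Gamma>_def by (simp add: field_simps)
  show "l2 p (\<lambda>i. ws T i - wstar i) \<le> \<epsilon> + 10 * L / \<alpha> *
              (2 / L * Max {l2 p (restr S (g wstar)) | S. S \<subseteq> {..<p} \<and> gsupp_card G M S \<le> k})"
  proof (cases "p = 0")
    case True
    have "Sset \<subseteq> {0}" unfolding Sset_def True by (auto simp: l2_def)
    moreover have "l2 p (restr {} (g wstar)) \<in> Sset" unfolding Sset_def using gsupp_empty[of G M] by auto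
    then have "Max Sset \<in> Sset" using finS by (intro Max_in) auto
    ultimately have "Max Sset = 0" by auto
    then have "Max {l2 p (restr S (g wstar)) | S. S \<subseteq> {..<p} \<and> gsupp_card G M S \<le> k} = 0"
      unfolding Sset_def .
    moreover have "l2 p (\<lambda>i. ws T i - wstar i) = 0" unfolding True l2_def by simp
    ultimately show ?thesis using eps by simp
  next
    case False
    then have p0: "0 < p" by simp
    have aL: "\<alpha> \<le> L"
    proof -
      define v where "v = (\<lambda>i::nat. if i = 0 then (1::real) else 0)"
      have vR: "v \<in> Rp p" using p0 unfolding v_def Rp_def by auto
      have zR: "(\<lambda>_. 0) \<in> Rp p" unfolding Rp_def by auto
      have zg: "gnorm0 G M (\<lambda>_. 0) \<le> 2 * k + kstar" using gnorm0_le[of "{}" M G "\<lambda>_. 0"] by simp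
      have l2v: "(l2 p v)\<^sup>2 = 1"
      proof -
        have "(\<Sum>i<p. (v i)\<^sup>2) = (\<Sum>i<p. if i = 0 then 1 else 0)" by (rule sum.cong) (auto simp: v_def)
        also have "\<dots> = 1" using p0 by (subst sum.delta) auto
        finally show ?thesis unfolding l2_sq .
      qed
      have "\<alpha> * (l2 p v)\<^sup>2 \<le> (\<Sum>i<p. \<Sum>j<p. v i * H (\<lambda>_. 0) i j * v j) \<and>
            (\<Sum>i<p. \<Sum>j<p. v i * H (\<lambda>_. 0) i j * v j) \<le> L * (l2 p v)\<^sup>2"
        using rs zR vR zg unfolding rsc_rss_def by blast
      then have "\<alpha> * (l2 p v)\<^sup>2 \<le> L * (l2 p v)\<^sup>2" by linarith
      then show ?thesis unfolding l2v by simp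
    qed
    have L: "0 < L" using a aL by linarith
    define u where "u = \<alpha> / L"
    have u: "0 < u" "u \<le> 1" unfolding u_def using a aL L by auto
    have kk: "73 * real kstar \<le> (\<alpha> / L)\<^sup>2 * real k"
    proof -
      have "(\<alpha> / L)\<^sup>2 * (73 * (L / \<alpha>)\<^sup>2 * real kstar) = 73 * real kstar"
        using a L by (simp add: field_simps power2_eq_square)
      moreover have "(\<alpha> / L)\<^sup>2 * (73 * (L / \<alpha>)\<^sup>2 * real kstar) \<le> (\<alpha> / L)\<^sup>2 * real k"
        using kk0 by (intro mult_left_mono) auto
      ultimately show ?thesis by linarith
    qed
    have inv: "ws t \<in> Rp p \<and> gnorm0 G M (ws t) \<le> k" for t
    proof (cases t)
      case 0
      have "gnorm0 G M (\<lambda>_. 0) \<le> k" using gnorm0_le[of "{}" M G "\<lambda>_. 0"] by simp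
      then show ?thesis using 0 ws0 unfolding Rp_def by auto
    next
      case (Suc t') then show ?thesis using wsS[of t'] unfolding proj_set_def by auto
    qed
    define B where "B = 5 * (3 * \<Gamma>\<^sup>2 / L\<^sup>2) / u"
    define A where "A = 4 * B / u"
    define c where "c = 1 - u / 4"
    define d where "d = (\<lambda>t. (l2 p (\<lambda>i. ws t i - wstar i))\<^sup>2)"
    have rec: "d (Suc t) \<le> c * d t + B" for t
      unfolding d_def c_def B_def u_def
      by (rule step[OF grp td rs a aL kk ks wsR wsg conjunct1[OF inv[of t]] conjunct2[OF inv[of t]] wsS[of t] Gam])
    have c0: "0 \<le> c" unfolding c_def using u by simp
    have AB: "c * A + B = A" unfolding A_def c_def using u by (simp add: field_simps)
    have bound: "d t \<le> A + c ^ t * d 0" for t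
    proof (induction t)
      case 0 then show ?case unfolding A_def B_def using u G0 by simp
    next
      case (Suc t)
      have "d (Suc t) \<le> c * d t + B" by (rule rec)
      also have "\<dots> \<le> c * (A + c ^ t * d 0) + B" using Suc c0 by (intro add_right_mono mult_left_mono) auto
      also have "\<dots> = (c * A + B) + c ^ Suc t * d 0" by (simp add: algebra_simps)
      finally show ?case unfolding AB .
    qed
    define R where "R = l2 p wstar"
    have R0: "0 \<le> R" unfolding R_def by (rule l2_nonneg)
    have d0: "d 0 = R\<^sup>2" unfolding d_def R_def l2_sq ws0 by (simp add: power2_commute)
    have cT: "c ^ T * R\<^sup>2 \<le> \<epsilon>\<^sup>2"
    proof -
      have "c \<le> exp (- (u / 4))" unfolding c_def using exp_ge_add_one_self[of "- (u / 4)"] by simp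
      then have "c ^ T \<le> exp (- (u / 4)) ^ T" using c0 by (intro power_mono) auto
      also have "\<dots> = exp (- (u / 4) * real T)" by (simp add: exp_of_nat_mult[symmetric] mult.commute)
      also have "\<dots> \<le> exp (- 2 * (R / \<epsilon>))"
      proof -
        have "8 * (L / \<alpha>) * (R / \<epsilon>) \<le> real T" using T unfolding R_def .
        then have "u / 4 * (8 * (L / \<alpha>) * (R / \<epsilon>)) \<le> u / 4 * real T" using u by (intro mult_left_mono) auto
        moreover have "u / 4 * (8 * (L / \<alpha>) * (R / \<epsilon>)) = 2 * (R / \<epsilon>)" unfolding u_def using a L by (simp add: field_simps)
        ultimately show ?thesis by simp
      qed
      finally have "c ^ T * R\<^sup>2 \<le> exp (- 2 * (R / \<epsilon>)) * R\<^sup>2" by (intro mult_right_mono) auto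
      also have "\<dots> = \<epsilon>\<^sup>2 * ((R / \<epsilon>)\<^sup>2 * exp (- 2 * (R / \<epsilon>)))" using eps by (simp add: field_simps power2_eq_square)
      also have "\<dots> \<le> \<epsilon>\<^sup>2 * 1" using exp_bound[of "R / \<epsilon>"] R0 eps by (intro mult_left_mono) auto
      finally show ?thesis by simp
    qed
    have A60: "A = 60 * \<Gamma>\<^sup>2 / \<alpha>\<^sup>2" unfolding A_def B_def u_def using a L by (simp add: field_simps power2_eq_square)
    have "(l2 p (\<lambda>i. ws T i - wstar i))\<^sup>2 \<le> 60 * \<Gamma>\<^sup>2 / \<alpha>\<^sup>2 + \<epsilon>\<^sup>2"
      using bound[of T] cT unfolding d_def[symmetric] d0 A60 by (simp add: d_def)
    also have "\<dots> \<le> (\<epsilon> + 20 * \<Gamma> / \<alpha>)\<^sup>2"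
    proof -
      have "0 \<le> \<epsilon> * (\<Gamma> / \<alpha>)" using eps G0 a by simp
      moreover have "(\<epsilon> + 20 * \<Gamma> / \<alpha>)\<^sup>2 = \<epsilon>\<^sup>2 + 40 * (\<epsilon> * (\<Gamma> / \<alpha>)) + 400 * (\<Gamma> / \<alpha>)\<^sup>2"
        by (simp add: power2_eq_square algebra_simps)
      moreover have "(\<Gamma> / \<alpha>)\<^sup>2 = \<Gamma>\<^sup>2 / \<alpha>\<^sup>2" by (simp add: power_divide)
      moreover have "0 \<le> \<Gamma>\<^sup>2 / \<alpha>\<^sup>2" by simp
      ultimately show ?thesis by linarith
    qed
    finally have sq: "(l2 p (\<lambda>i. ws T i - wstar i))\<^sup>2 \<le> (\<epsilon> + 20 * \<Gamma> / \<alpha>)\<^sup>2" .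
    have nn: "0 \<le> \<epsilon> + 20 * \<Gamma> / \<alpha>" using eps G0 a by simp
    have fin: "l2 p (\<lambda>i. ws T i - wstar i) \<le> \<epsilon> + 20 * \<Gamma> / \<alpha>"
      by (rule power2_le_imp_le[OF sq nn])
    have e: "\<epsilon> + 10 * L / \<alpha> * (2 / L * Max Sset) = \<epsilon> + 20 * \<Gamma> / \<alpha>"
      by (rule RHS) (use L in simp)
    show ?thesis unfolding Sset_def[symmetric] e by (rule fin)
  qed
qed

end
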